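(* Let $K$ be an algebraically closed field, $R=K[x_1,\dots,x_N]$, and let $P$ be a finite set of monomials of $R$. Suppose $P_0,\dots,P_r\subseteq P$ satisfy: (i) $\bigcup_{i=0}^r P_i=P$; (ii) $P_0$ has exactly one element; (iii) for every $i$ with $0<i\le r$ and any two distinct $p,p''\in P_i$, there exist $i'$ with $0\le i'<i$ and $p'\in P_{i'}$ such that $p'$ divides $pp''$. Then $G=P$ and $S_i=P_i$ ($i=0,\dots,r$) satisfy hypotheses (i)–(iii) of the following statement: (i) $\bigcup S_i=G$; (ii) $|S_0|=1$; (iii) the recursive procedure — 0. set $T=S_0$; 1. pick an indeterminate $z$ dividing the only element of $T$; 2. remove all monomials divisible by $z$ from every $S_i$ and from $G$; 3. if no element of $G$ is left, end, otherwise pick $j$ such that exactly one element is left in $S_j$ and set $T$ to the current $S_j$; 4. go to 1 — can always be performed and always terminates, regardless of the choices of $z$ and $j$.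
   Context: Monomials are products of indeterminates (with coefficient 1). "Can always be performed" means that whenever monomials of $G$ remain after step 2, some $S_j$ has exactly one remaining element. *)

theory Defs
  imports Main
begin

text \<open>Monomials in the indeterminates indexed by a finite type 'v (the N indeterminates
  x_1,...,x_N) are represented by their exponent vectors  'v => nat.\<close>

type_synonym 'v monomial = "'v \<Rightarrow> nat"

definition mmult :: "'v monomial \<Rightarrow> 'v monomial \<Rightarrow> 'v monomial" where
  "mmult a b = (\<lambda>v. a v + b v)"

definition mdvd :: "'v monomial \<Rightarrow> 'v monomial \<Rightarrow> bool" where
  "mdvd a b \<longleftrightarrow> (\<forall>v. a v \<le> b v)"

definition indet :: "'v \<Rightarrow> 'v monomial" where
  "indet z = (\<lambda>v. if v = z then 1 else 0)"

definition remove_div :: "'v \<Rightarrow> 'v monomial set \<Rightarrow> 'v monomial set" where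
  "remove_div z A = {p \<in> A. \<not> mdvd (indet z) p}"

text \<open>States of the procedure: (S, G, T) with S the family S_0,...,S_r (indices > r unused),
  G the current set G, and T the current set T.\<close>
definition proc_step :: "nat \<Rightarrow>
   ((nat \<Rightarrow> 'v monomial set) \<times> 'v monomial set \<times> 'v monomial set) rel" where
  "proc_step r = {((S, G, T), (S', G', T')). \<exists>t z j.
      T = {t} \<and> mdvd (indet z) t \<and>
      S' = (\<lambda>i. remove_div z (S i)) \<and> G' = remove_div z G \<and>
      G' \<noteq> {} \<and> j \<le> r \<and> card (S' j) = 1 \<and> T' = S' j}"

text \<open>Reachable states (at the start of step 1), starting from step 0: T = S_0.\<close>
definition proc_reachable :: "nat \<Rightarrow> (nat \<Rightarrow> 'v monomial set) \<Rightarrow> 'v monomial set \<Rightarrow>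
   ((nat \<Rightarrow> 'v monomial set) \<times> 'v monomial set \<times> 'v monomial set) set" where
  "proc_reachable r S G = {st. ((S, G, S 0), st) \<in> (proc_step r)\<^sup>*}"

text \<open>"Can always be performed": whenever monomials of G remain after step 2 (for any
  choice of z in step 1), some S_j (j <= r) has exactly one remaining element.\<close>
definition proc_can_be_performed :: "nat \<Rightarrow> (nat \<Rightarrow> 'v monomial set) \<Rightarrow> 'v monomial set \<Rightarrow> bool" where
  "proc_can_be_performed r S G \<longleftrightarrow>
     (\<forall>S1 G1 T1 t z. (S1, G1, T1) \<in> proc_reachable r S G \<longrightarrow> T1 = {t} \<longrightarrow>
        mdvd (indet z) t \<longrightarrow> remove_div z G1 \<noteq> {} \<longrightarrow>
        (\<exists>j\<le>r. card (remove_div z (S1 j)) = 1))"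

text \<open>"Always terminates regardless of the choices": there is no infinite run.\<close>
definition proc_terminates :: "nat \<Rightarrow> (nat \<Rightarrow> 'v monomial set) \<Rightarrow> 'v monomial set \<Rightarrow> bool" where
  "proc_terminates r S G \<longleftrightarrow>
     \<not> (\<exists>f. f 0 = (S, G, S 0) \<and> (\<forall>n. (f n, f (Suc n)) \<in> proc_step r))"

end

theory Submission
  imports Defs
begin

definition surv :: "'v set \<Rightarrow> 'v monomial set \<Rightarrow> 'v monomial set" where
  "surv Z A = {p \<in> A. \<forall>v\<in>Z. p v = 0}"

lemma mdvd_indet: "mdvd (indet z) p \<longleftrightarrow> p z \<noteq> 0"
proof
  assume "mdvd (indet z) p"
  then have "indet z z \<le> p z" unfolding mdvd_def by blast
  then show "p z \<noteq> 0" by (simp add: indet_def)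
next
  assume "p z \<noteq> 0"
  then show "mdvd (indet z) p" by (auto simp: mdvd_def indet_def)
qed

lemma remove_div_surv: "remove_div z (surv Z A) = surv (insert z Z) A"
  by (auto simp: remove_div_def surv_def mdvd_indet)

lemma key:
  fixes P :: "('v::finite) monomial set" and Ps :: "nat \<Rightarrow> 'v monomial set" and r :: nat
  assumes fin: "finite P"
    and sub: "\<forall>i\<le>r. Ps i \<subseteq> P"
    and un: "(\<Union>i\<le>r. Ps i) = P"
    and c0: "card (Ps 0) = 1"
    and h: "\<forall>i. 0 < i \<and> i \<le> r \<longrightarrow> (\<forall>p\<in>Ps i. \<forall>p''\<in>Ps i. p \<noteq> p'' \<longrightarrow>
           (\<exists>i'<i. \<exists>p'\<in>Ps i'. mdvd p' (mmult p p'')))"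
    and ne: "surv Z P \<noteq> {}"
  shows "\<exists>j\<le>r. card (surv Z (Ps j)) = 1"
proof -
  obtain p where p: "p \<in> surv Z P" using ne by blast
  then obtain i where i: "i \<le> r" "p \<in> Ps i" using un by (auto simp: surv_def)
  define Q where "Q = (\<lambda>i. i \<le> r \<and> surv Z (Ps i) \<noteq> {})"
  have Qi: "Q i" using i p by (auto simp: Q_def surv_def)
  define i0 where "i0 = (LEAST i. Q i)"
  have Q0: "Q i0" unfolding i0_def by (rule LeastI[of Q i, OF Qi])
  have min: "\<And>k. k < i0 \<Longrightarrow> \<not> Q k" unfolding i0_def by (rule not_less_Least)
  have all_eq: "\<forall>a\<in>surv Z (Ps i0). \<forall>b\<in>surv Z (Ps i0). a = b"
  proof (cases "i0 = 0")
    case True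
    obtain x where "Ps 0 = {x}" using c0 by (auto simp: card_1_singleton_iff)
    then have "Ps i0 = {x}" using True by simp
    then show ?thesis by (auto simp: surv_def)
  next
    case False
    show ?thesis
    proof (intro ballI, rule ccontr)
      fix a b assume a: "a \<in> surv Z (Ps i0)" and b: "b \<in> surv Z (Ps i0)" and ab: "a \<noteq> b"
      have "0 < i0" "i0 \<le> r" using False Q0 by (auto simp: Q_def)
      then obtain i' p' where i': "i' < i0" "p' \<in> Ps i'" "mdvd p' (mmult a b)"
      proof -
        have "a \<in> Ps i0" "b \<in> Ps i0" using a b by (auto simp: surv_def)
        then have "\<exists>i'<i0. \<exists>p'\<in>Ps i'. mdvd p' (mmult a b)"
        proof -
          have "\<forall>p\<in>Ps i0. \<forall>p''\<in>Ps i0. p \<noteq> p'' \<longrightarrow> (\<exists>i'<i0. \<exists>p'\<in>Ps i'. mdvd p' (mmult p p''))"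
            using h \<open>0 < i0\<close> \<open>i0 \<le> r\<close> by simp
          then show ?thesis using \<open>a \<in> Ps i0\<close> \<open>b \<in> Ps i0\<close> ab by simp
        qed
        then show ?thesis using that by blast
      qed
      have "p' \<in> surv Z (Ps i')"
      proof -
        have "\<forall>v\<in>Z. p' v = 0"
        proof
          fix v assume "v \<in> Z"
          then have "a v = 0" "b v = 0" using a b by (auto simp: surv_def)
          moreover have "p' v \<le> a v + b v" using i'(3) by (auto simp: mdvd_def mmult_def)
          ultimately show "p' v = 0" by simp
        qed
        then show ?thesis using i' by (auto simp: surv_def)
      qed
      then have "Q i'" using i' \<open>i0 \<le> r\<close> by (auto simp: Q_def)
      then show False using min i' by blast
    qed
  qed
  have "surv Z (Ps i0) \<noteq> {}" using Q0 by (simp add: Q_def)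
  then obtain x where x: "x \<in> surv Z (Ps i0)" by blast
  then have "surv Z (Ps i0) = {x}" using all_eq by blast
  then show ?thesis using Q0 by (auto simp: Q_def)
qed

definition inv_st :: "nat \<Rightarrow> (nat \<Rightarrow> 'v monomial set) \<Rightarrow> 'v monomial set \<Rightarrow>
   ((nat \<Rightarrow> 'v monomial set) \<times> 'v monomial set \<times> 'v monomial set) \<Rightarrow> bool" where
  "inv_st r Ps P st \<longleftrightarrow> (\<exists>Z. fst st = (\<lambda>i. surv Z (Ps i)) \<and> fst (snd st) = surv Z P \<and>
      (\<exists>j\<le>r. snd (snd st) = surv Z (Ps j)))"

lemma reach_inv:
  assumes "((Ps, P, Ps 0), st) \<in> (proc_step r)\<^sup>*"
  shows "inv_st r Ps P st"
  using assms
proof (induction rule: rtrancl_induct)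
  case base
  show ?case unfolding inv_st_def
    by (rule exI[of _ "{}"]) (auto simp: surv_def)
next
  case (step y w)
  obtain S G T where y: "y = (S, G, T)" by (cases y) auto
  obtain S' G' T' where w: "w = (S', G', T')" by (cases w) auto
  from step.IH y obtain Z where Z: "S = (\<lambda>i. surv Z (Ps i))" "G = surv Z P"
    unfolding inv_st_def by auto
  from step.hyps(2) y w obtain t z j where st: "T = {t}" "mdvd (indet z) t"
      "S' = (\<lambda>i. remove_div z (S i))" "G' = remove_div z G" "j \<le> r" "T' = S' j"
    unfolding proc_step_def by blast
  have S': "S' = (\<lambda>i. surv (insert z Z) (Ps i))" using Z(1) st(3) by (simp add: remove_div_surv)
  moreover have "G' = surv (insert z Z) P" using Z(2) st(4) by (simp add: remove_div_surv)
  moreover have "T' = surv (insert z Z) (Ps j)" using S' st(6) by simp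
  ultimately show ?case unfolding inv_st_def w using st(5) by auto
qed

theorem mainTheorem3:
  fixes P :: "('v::finite) monomial set" and Ps :: "nat \<Rightarrow> 'v monomial set" and r :: nat
  assumes "finite P"
    and "\<forall>i\<le>r. Ps i \<subseteq> P"
    and "(\<Union>i\<le>r. Ps i) = P"
    and "card (Ps 0) = 1"
    and "\<forall>i. 0 < i \<and> i \<le> r \<longrightarrow> (\<forall>p\<in>Ps i. \<forall>p''\<in>Ps i. p \<noteq> p'' \<longrightarrow>
           (\<exists>i'<i. \<exists>p'\<in>Ps i'. mdvd p' (mmult p p'')))"
  shows "(\<Union>i\<le>r. Ps i) = P \<and> card (Ps 0) = 1 \<and>
         proc_can_be_performed r Ps P \<and> proc_terminates r Ps P"
proof -
  have perf: "proc_can_be_performed r Ps P"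
    unfolding proc_can_be_performed_def
  proof (intro allI impI)
    fix S1 G1 T1 t z
    assume R: "(S1, G1, T1) \<in> proc_reachable r Ps P" and ne: "remove_div z G1 \<noteq> {}"
    from R have "inv_st r Ps P (S1, G1, T1)" using reach_inv[of Ps P "(S1, G1, T1)" r]
      unfolding proc_reachable_def by simp
    then obtain Z where Z: "S1 = (\<lambda>i. surv Z (Ps i))" "G1 = surv Z P"
      unfolding inv_st_def by auto
    have "surv (insert z Z) P \<noteq> {}" using ne Z by (simp add: remove_div_surv)
    from key[OF assms this] show "\<exists>j\<le>r. card (remove_div z (S1 j)) = 1"
      using Z by (simp add: remove_div_surv)
  qed
  have termi: "proc_terminates r Ps P"
    unfolding proc_terminates_def
  proof
    assume "\<exists>f. f 0 = (Ps, P, Ps 0) \<and> (\<forall>n. (f n, f (Suc n)) \<in> proc_step r)"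
    then obtain f where f0: "f 0 = (Ps, P, Ps 0)" and fs: "\<And>n. (f n, f (Suc n)) \<in> proc_step r"
      by blast
    have reach: "((Ps, P, Ps 0), f n) \<in> (proc_step r)\<^sup>*" for n
    proof (induction n)
      case 0 then show ?case using f0 by simp
    next
      case (Suc n) then show ?case using fs[of n] by (rule rtrancl_into_rtrancl)
    qed
    have dec: "fst (snd (f (Suc n))) \<subset> fst (snd (f n))" for n
    proof -
      obtain S G T where y: "f n = (S, G, T)" by (cases "f n") auto
      obtain S' G' T' where w: "f (Suc n) = (S', G', T')" by (cases "f (Suc n)") auto
      have "inv_st r Ps P (S, G, T)" using reach_inv[OF reach[of n]] y by simp
      then obtain Z j where Z: "S = (\<lambda>i. surv Z (Ps i))" "G = surv Z P" "j \<le> r" "T = surv Z (Ps j)"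
        unfolding inv_st_def by auto
      have "((S, G, T), (S', G', T')) \<in> proc_step r" using fs[of n] y w by simp
      then obtain t z where st: "T = {t}" "mdvd (indet z) t"
          "G' = remove_div z G"
        unfolding proc_step_def by blast
      have "Ps j \<subseteq> P" using assms(2) Z(3) by blast
      then have "surv Z (Ps j) \<subseteq> surv Z P" by (auto simp: surv_def)
      then have "t \<in> G" using Z st by auto
      moreover have "t \<notin> G'" using st by (auto simp: remove_div_def)
      moreover have "G' \<subseteq> G" using st by (auto simp: remove_div_def)
      ultimately show ?thesis using y w by auto
    qed
    have fin: "finite (fst (snd (f n)))" for n
    proof (induction n)
      case 0 then show ?case using f0 assms(1) by simp
    next
      case (Suc n) then show ?case using dec[of n] by (meson finite_subset psubset_imp_subset)
    qed
    have "n + card (fst (snd (f n))) \<le> card P" for n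
    proof (induction n)
      case 0 then show ?case using f0 by simp
    next
      case (Suc n)
      have "card (fst (snd (f (Suc n)))) < card (fst (snd (f n)))"
        using psubset_card_mono[OF fin dec] by blast
      then show ?case using Suc by simp
    qed
    from this[of "Suc (card P)"] show False by simp
  qed
  show ?thesis using assms(3,4) perf termi by simp
qed

end
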